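(* Let $\mathfrak F$ be a Frankenstein graph and let $\mathsf P\subseteq\mathfrak F$ be a path with terminals $s$ and $t$. Then there exists a rainbow path $\mathsf P'\subseteq\mathfrak F$ with terminals $s$ and $t$.
   Context: A (colored) graph is a finite set $\mathsf G$ of pairs $(e,\alpha)$, where the $e$'s are pairwise distinct 2-element subsets of a vertex set and $\alpha$ is a color (colors may repeat). $V(\mathsf G)$ is its vertex set and $\chi(\mathsf G)$ its set of colors; $\mathsf G$ is rainbow if $|\chi(\mathsf G)|=|\mathsf G|$ and almost rainbow if $|\chi(\mathsf G)|=|\mathsf G|-1$. A subgraph is a subset. Paths, cycles, trees are colored graphs whose underlying uncolored edges form a path (two distinct terminals), cycle, or tree; lengths count edges. A long rainbow odd cycle is a rainbow cycle of odd length at least $7$. A theta graph is a union $\mathsf P_1\cup\mathsf P_2\cup\mathsf P_3$ of three paths with the same terminals $s\neq t$ such that any two share no vertex other than $s,t$ and no underlying uncolored edge. A bad piece is an almost rainbow theta graph with at least $6$ vertices that is the union of three rainbow paths as in the definition of a theta graph. A partition of a graph $\mathsf G$ is a collection $\{\mathsf G_1,\dots,\mathsf G_m\}$ of graphs with $\mathsf G=\bigcup_i\mathsf G_i$ and, for $i\ne j$, $|V(\mathsf G_i)\cap V(\mathsf G_j)|\le 1$ and $\chi(\mathsf G_i)\cap\chi(\mathsf G_j)=\emptyset$; its members are called parts. A Frankenstein graph is a graph $\mathfrak F$ together with a partition $\{\mathsf C_1,\dots,\mathsf C_c,\mathsf B_1,\dots,\mathsf B_b,\mathsf T_1,\dots,\mathsf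 T_t\}$ ($c,b,t\ge0$, $c+b+t\ge1$) in which the $\mathsf C_i$ are long rainbow odd cycles, the $\mathsf B_i$ are bad pieces and the $\mathsf T_i$ are rainbow trees, such that (F1) $V(\mathsf T_p)\cap V(\mathsf T_q)=\emptyset$ for $p\neq q$, and (F2) no subgraph of $\mathfrak F$ is a rainbow even cycle. *)

theory Defs
  imports Main
begin

type_synonym ('v, 'c) cgraph = "('v set \<times> 'c) set"

definition colored_graph :: "('v, 'c) cgraph \<Rightarrow> bool" where
  "colored_graph G \<longleftrightarrow> finite G \<and> (\<forall>e\<in>fst ` G. card e = 2) \<and> inj_on fst G"

definition verts :: "('v, 'c) cgraph \<Rightarrow> 'v set" where
  "verts G = \<Union> (fst ` G)"

definition colors :: "('v, 'c) cgraph \<Rightarrow> 'c set" where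
  "colors G = snd ` G"

definition rainbow :: "('v, 'c) cgraph \<Rightarrow> bool" where
  "rainbow G \<longleftrightarrow> card (colors G) = card G"

definition almost_rainbow :: "('v, 'c) cgraph \<Rightarrow> bool" where
  "almost_rainbow G \<longleftrightarrow> card (colors G) + 1 = card G"

definition is_path :: "('v, 'c) cgraph \<Rightarrow> 'v \<Rightarrow> 'v \<Rightarrow> bool" where
  "is_path G s t \<longleftrightarrow> colored_graph G \<and> s \<noteq> t \<and>
     (\<exists>vs. distinct vs \<and> length vs \<ge> 2 \<and> hd vs = s \<and> last vs = t \<and>
        fst ` G = {{vs ! i, vs ! Suc i} | i. Suc i < length vs})"

definition is_cycle :: "('v, 'c) cgraph \<Rightarrow> bool" where
  "is_cycle G \<longleftrightarrow> colored_graph G \<and>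
     (\<exists>vs. distinct vs \<and> length vs \<ge> 3 \<and>
        fst ` G = {{vs ! i, vs ! (Suc i mod length vs)} | i. i < length vs})"

definition connected_cg :: "('v, 'c) cgraph \<Rightarrow> bool" where
  "connected_cg G \<longleftrightarrow> (\<forall>u\<in>verts G. \<forall>v\<in>verts G. u \<noteq> v \<longrightarrow> (\<exists>P\<subseteq>G. is_path P u v))"

definition is_tree :: "('v, 'c) cgraph \<Rightarrow> bool" where
  "is_tree G \<longleftrightarrow> colored_graph G \<and> G \<noteq> {} \<and> connected_cg G \<and> \<not> (\<exists>C\<subseteq>G. is_cycle C)"

definition long_rainbow_odd_cycle :: "('v, 'c) cgraph \<Rightarrow> bool" where
  "long_rainbow_odd_cycle G \<longleftrightarrow> is_cycle G \<and> rainbow G \<and> odd (card G) \<and> card G \<ge> 7"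

definition theta_paths :: "('v, 'c) cgraph \<Rightarrow> ('v, 'c) cgraph \<Rightarrow> ('v, 'c) cgraph \<Rightarrow> 'v \<Rightarrow> 'v \<Rightarrow> bool" where
  "theta_paths P1 P2 P3 s t \<longleftrightarrow> is_path P1 s t \<and> is_path P2 s t \<and> is_path P3 s t \<and>
     verts P1 \<inter> verts P2 \<subseteq> {s, t} \<and> verts P1 \<inter> verts P3 \<subseteq> {s, t} \<and>
     verts P2 \<inter> verts P3 \<subseteq> {s, t} \<and>
     fst ` P1 \<inter> fst ` P2 = {} \<and> fst ` P1 \<inter> fst ` P3 = {} \<and> fst ` P2 \<inter> fst ` P3 = {}"

definition is_theta :: "('v, 'c) cgraph \<Rightarrow> bool" where
  "is_theta G \<longleftrightarrow> (\<exists>P1 P2 P3 s t. theta_paths P1 P2 P3 s t \<and> G = P1 \<union> P2 \<union> P3)"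

definition bad_piece :: "('v, 'c) cgraph \<Rightarrow> bool" where
  "bad_piece B \<longleftrightarrow> almost_rainbow B \<and> card (verts B) \<ge> 6 \<and>
     (\<exists>P1 P2 P3 s t. theta_paths P1 P2 P3 s t \<and> B = P1 \<union> P2 \<union> P3 \<and>
        rainbow P1 \<and> rainbow P2 \<and> rainbow P3)"

definition is_partition :: "('v, 'c) cgraph \<Rightarrow> ('v, 'c) cgraph list \<Rightarrow> bool" where
  "is_partition G Gs \<longleftrightarrow> G = \<Union> (set Gs) \<and>
     (\<forall>i<length Gs. \<forall>j<length Gs. i \<noteq> j \<longrightarrow>
        card (verts (Gs ! i) \<inter> verts (Gs ! j)) \<le> 1 \<and> colors (Gs ! i) \<inter> colors (Gs ! j) = {})"

definition frankenstein ::
  "('v, 'c) cgraph \<Rightarrow> ('v, 'c) cgraph list \<Rightarrow> ('v, 'c) cgraph list \<Rightarrow> ('v, 'c) cgraph list \<Rightarrow> bool" where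
  "frankenstein F Cs Bs Ts \<longleftrightarrow> colored_graph F \<and>
     is_partition F (Cs @ Bs @ Ts) \<and> Cs @ Bs @ Ts \<noteq> [] \<and>
     (\<forall>C\<in>set Cs. long_rainbow_odd_cycle C) \<and>
     (\<forall>B\<in>set Bs. bad_piece B) \<and>
     (\<forall>T\<in>set Ts. is_tree T \<and> rainbow T) \<and>
     (\<forall>p<length Ts. \<forall>q<length Ts. p \<noteq> q \<longrightarrow> verts (Ts ! p) \<inter> verts (Ts ! q) = {}) \<and>
     \<not> (\<exists>H\<subseteq>F. is_cycle H \<and> rainbow H \<and> even (card H))"

end

theory Submission
  imports Defs
begin

definition Adj :: "('v, 'c) cgraph \<Rightarrow> ('v \<times> 'v) set" where
  "Adj E = {(u,v). \<exists>c. ({u,v},c) \<in> E}"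

lemma Adj_mono: "E \<subseteq> E' \<Longrightarrow> Adj E \<subseteq> Adj E'"
  unfolding Adj_def by auto

lemma reach_mono: "E \<subseteq> E' \<Longrightarrow> (u,v) \<in> (Adj E)\<^sup>* \<Longrightarrow> (u,v) \<in> (Adj E')\<^sup>*"
  using rtrancl_mono[OF Adj_mono] by blast

lemma Adj_sym: "(u,v) \<in> Adj E \<Longrightarrow> (v,u) \<in> Adj E"
  unfolding Adj_def by (auto simp: insert_commute)

lemma reach_sym: "(u,v) \<in> (Adj E)\<^sup>* \<Longrightarrow> (v,u) \<in> (Adj E)\<^sup>*"
proof (induction rule: rtrancl_induct)
  case base then show ?case by simp
next
  case (step y z)
  then show ?case using converse_rtrancl_into_rtrancl[OF Adj_sym[OF step(2)] step(3)] by simp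
qed

lemma seg_reach:
  assumes "\<And>k. i \<le> k \<Longrightarrow> Suc k \<le> j \<Longrightarrow> \<exists>c. ({vs!k, vs!Suc k}, c) \<in> E" "i \<le> j"
  shows "(vs!i, vs!j) \<in> (Adj E)\<^sup>*"
  using assms
proof (induction j)
  case 0 then show ?case by simp
next
  case (Suc j)
  show ?case
  proof (cases "i = Suc j")
    case True then show ?thesis by simp
  next
    case False
    then have "i \<le> j" using Suc by simp
    then have "(vs!i, vs!j) \<in> (Adj E)\<^sup>*" using Suc by simp
    moreover have "(vs!j, vs!Suc j) \<in> Adj E" using Suc(2)[of j] \<open>i \<le> j\<close> unfolding Adj_def by auto
    ultimately show ?thesis by (rule rtrancl_into_rtrancl)
  qed
qed

lemma path_reach:
  assumes "is_path P s t" shows "(s,t) \<in> (Adj P)\<^sup>*"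
proof -
  obtain vs where vs: "distinct vs" "length vs \<ge> 2" "hd vs = s" "last vs = t"
    "fst ` P = {{vs ! i, vs ! Suc i} | i. Suc i < length vs}"
    using assms unfolding is_path_def by blast
  have "(vs!0, vs!(length vs - 1)) \<in> (Adj P)\<^sup>*"
  proof (rule seg_reach)
    fix k assume "0 \<le> k" "Suc k \<le> length vs - 1"
    then have "{vs!k, vs!Suc k} \<in> fst ` P" using vs(5) by auto
    then show "\<exists>c. ({vs!k, vs!Suc k}, c) \<in> P" by force
  qed simp
  moreover have ne: "vs \<noteq> []" using vs(2) by auto
  moreover have "vs!0 = s" using hd_conv_nth[OF ne] vs(3) by simp
  moreover have "vs!(length vs - 1) = t" using last_conv_nth[OF ne] vs(4) by simp
  ultimately show ?thesis by simp
qed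

lemma edge_inj:
  assumes "distinct vs" "Suc k < length vs" "Suc m < length vs"
    "{vs!k, vs!Suc k} = {vs!m, vs!Suc m}"
  shows "k = m"
proof -
  have "(vs!k = vs!m \<and> vs!Suc k = vs!Suc m) \<or> (vs!k = vs!Suc m \<and> vs!Suc k = vs!m)"
    using assms(4) by (simp add: doubleton_eq_iff)
  then show ?thesis using assms(1-3) by (auto simp: nth_eq_iff_index_eq)
qed

lemma theta_edge_reach:
  assumes "is_path Pa s t" "is_path Pb s t" "fst ` Pa \<inter> fst ` Pb = {}"
    "Pa \<subseteq> B" "Pb \<subseteq> B" "x \<in> Pa" "fst x = {u,v}"
  shows "(u,v) \<in> (Adj (B - {x}))\<^sup>*"
proof -
  obtain vs where vs: "distinct vs" "length vs \<ge> 2" "hd vs = s" "last vs = t"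
    "fst ` Pa = {{vs ! i, vs ! Suc i} | i. Suc i < length vs}"
    using assms(1) unfolding is_path_def by blast
  have "fst x \<in> fst ` Pa" using assms(6) by simp
  then have "fst x \<in> {{vs ! i, vs ! Suc i} | i. Suc i < length vs}" by (simp only: vs(5))
  then obtain m where m: "Suc m < length vs" "fst x = {vs!m, vs!Suc m}" by blast
  have edge: "\<exists>c. ({vs!k, vs!Suc k}, c) \<in> B - {x}" if "Suc k < length vs" "k \<noteq> m" for k
  proof -
    have "{vs!k, vs!Suc k} \<in> fst ` Pa" unfolding vs(5) using that by blast
    then obtain c where c: "({vs!k, vs!Suc k}, c) \<in> Pa" by force
    have "({vs!k, vs!Suc k}, c) \<noteq> x"
    proof
      assume "({vs!k, vs!Suc k}, c) = x"
      then have "{vs!k, vs!Suc k} = {vs!m, vs!Suc m}" using m(2) by (metis fst_conv)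
      then show False using edge_inj[OF vs(1) that(1) m(1)] that(2) by blast
    qed
    then show ?thesis using c assms(4) by blast
  qed
  have A: "(vs!0, vs!m) \<in> (Adj (B - {x}))\<^sup>*"
  proof (rule seg_reach)
    fix k assume "0 \<le> k" "Suc k \<le> m"
    then show "\<exists>c. ({vs!k, vs!Suc k}, c) \<in> B - {x}" using edge[of k] m(1) by simp
  qed simp
  have B: "(vs!Suc m, vs!(length vs - 1)) \<in> (Adj (B - {x}))\<^sup>*"
  proof (rule seg_reach)
    fix k assume "Suc m \<le> k" "Suc k \<le> length vs - 1"
    then show "\<exists>c. ({vs!k, vs!Suc k}, c) \<in> B - {x}" using edge[of k] m(1) by simp
  qed (use m in simp)
  have ne: "vs \<noteq> []" using vs(2) by auto
  have s0: "vs!0 = s" using hd_conv_nth[OF ne] vs(3) by simp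
  have tn: "vs!(length vs - 1) = t" using last_conv_nth[OF ne] vs(4) by simp
  have "Pb \<subseteq> B - {x}"
  proof
    fix z assume z: "z \<in> Pb"
    have "z \<noteq> x"
    proof
      assume "z = x"
      then have "fst x \<in> fst ` Pa \<inter> fst ` Pb" using z assms(6) by blast
      then show False using assms(3) by simp
    qed
    then show "z \<in> B - {x}" using z assms(5) by blast
  qed
  then have C: "(s,t) \<in> (Adj (B - {x}))\<^sup>*"
    using reach_mono path_reach[OF assms(2)] by metis
  have "(vs!m, vs!Suc m) \<in> (Adj (B - {x}))\<^sup>*"
  proof -
    have "(vs!m, s) \<in> (Adj (B - {x}))\<^sup>*" using reach_sym[OF A] s0 by simp
    moreover have "(t, vs!Suc m) \<in> (Adj (B - {x}))\<^sup>*" using reach_sym[OF B] tn by simp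
    ultimately show ?thesis using C rtrancl_trans by metis
  qed
  moreover have disj: "(u = vs!m \<and> v = vs!Suc m) \<or> (u = vs!Suc m \<and> v = vs!m)"
  proof -
    have "{u,v} = {vs!m, vs!Suc m}" using assms(7) m(2) by simp
    then show ?thesis by (metis doubleton_eq_iff)
  qed
  from disj show ?thesis
  proof
    assume "u = vs!m \<and> v = vs!Suc m"
    then show ?thesis using \<open>(vs!m, vs!Suc m) \<in> _\<close> by simp
  next
    assume "u = vs!Suc m \<and> v = vs!m"
    then show ?thesis using reach_sym[OF \<open>(vs!m, vs!Suc m) \<in> _\<close>] by simp
  qed
qed

lemma walk_list:
  assumes "(s,t) \<in> r\<^sup>*"
  shows "\<exists>vs. distinct vs \<and> vs \<noteq> [] \<and> hd vs = s \<and> last vs = t \<and>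
           (\<forall>i. Suc i < length vs \<longrightarrow> (vs!i, vs!Suc i) \<in> r)"
  using assms
proof (induction rule: rtrancl_induct)
  case base
  then show ?case by (intro exI[of _ "[s]"]) auto
next
  case (step y z)
  then obtain vs where vs: "distinct vs" "vs \<noteq> []" "hd vs = s" "last vs = y"
    "\<forall>i. Suc i < length vs \<longrightarrow> (vs!i, vs!Suc i) \<in> r" by blast
  show ?case
  proof (cases "z \<in> set vs")
    case True
    then obtain k where k: "k < length vs" "vs!k = z" by (auto simp: in_set_conv_nth)
    show ?thesis
    proof (intro exI[of _ "take (Suc k) vs"] conjI)
      show "distinct (take (Suc k) vs)" using vs by simp
      show "take (Suc k) vs \<noteq> []" using vs by simp
      show "hd (take (Suc k) vs) = s" using vs by simp
      have "take (Suc k) vs \<noteq> []" using vs by simp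
      then show "last (take (Suc k) vs) = z" using k
        by (subst last_conv_nth) auto
      show "\<forall>i. Suc i < length (take (Suc k) vs) \<longrightarrow>
        (take (Suc k) vs ! i, take (Suc k) vs ! Suc i) \<in> r" using vs(5) by auto
    qed
  next
    case False
    show ?thesis
    proof (intro exI[of _ "vs @ [z]"] conjI)
      show "distinct (vs @ [z])" using vs False by simp
      show "vs @ [z] \<noteq> []" by simp
      show "hd (vs @ [z]) = s" using vs by simp
      show "last (vs @ [z]) = z" by simp
      show "\<forall>i. Suc i < length (vs @ [z]) \<longrightarrow> ((vs @ [z]) ! i, (vs @ [z]) ! Suc i) \<in> r"
      proof (intro allI impI)
        fix i assume i: "Suc i < length (vs @ [z])"
        show "((vs @ [z]) ! i, (vs @ [z]) ! Suc i) \<in> r"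
        proof (cases "Suc i < length vs")
          case True then show ?thesis using vs(5) by (simp add: nth_append)
        next
          case False
          then have "i = length vs - 1" using i by simp
          then show ?thesis using vs step(2) False i
            by (simp add: nth_append last_conv_nth)
        qed
      qed
    qed
  qed
qed

lemma walk_to_path:
  assumes "(s,t) \<in> (Adj G)\<^sup>*" "s \<noteq> t" "colored_graph G"
  shows "\<exists>P\<subseteq>G. is_path P s t"
proof -
  obtain vs where vs: "distinct vs" "vs \<noteq> []" "hd vs = s" "last vs = t"
    "\<forall>i. Suc i < length vs \<longrightarrow> (vs!i, vs!Suc i) \<in> Adj G"
    using walk_list[OF assms(1)] by blast
  define EE where "EE = {{vs ! i, vs ! Suc i} | i. Suc i < length vs}"
  define P where "P = {x\<in>G. fst x \<in> EE}"
  have len: "length vs \<ge> 2"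
  proof (rule ccontr)
    assume "\<not> ?thesis"
    moreover have "length vs \<noteq> 0" using vs(2) by simp
    ultimately have "length vs = Suc 0" by linarith
    then obtain a where "vs = [a]" by (auto simp: length_Suc_conv)
    then show False using vs assms(2) by simp
  qed
  have "fst ` P = EE"
  proof
    show "fst ` P \<subseteq> EE" unfolding P_def by auto
    show "EE \<subseteq> fst ` P"
    proof
      fix e assume "e \<in> EE"
      then obtain i where i: "Suc i < length vs" "e = {vs!i, vs!Suc i}" unfolding EE_def by blast
      then obtain c where "(e,c) \<in> G" using vs(5) unfolding Adj_def by blast
      then show "e \<in> fst ` P" unfolding P_def using \<open>e \<in> EE\<close> by force
    qed
  qed
  moreover have sub: "P \<subseteq> G" unfolding P_def by auto
  moreover have "colored_graph P"
  proof -
    have g: "finite G" "\<forall>e\<in>fst ` G. card e = 2" "inj_on fst G"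
      using assms(3) unfolding colored_graph_def by auto
    have "finite P" using finite_subset[OF sub g(1)] .
    moreover have "\<forall>e\<in>fst ` P. card e = 2" using g(2) sub by blast
    moreover have "inj_on fst P" using inj_on_subset[OF g(3) sub] .
    ultimately show ?thesis unfolding colored_graph_def by blast
  qed
  ultimately have "is_path P s t" unfolding is_path_def
    apply (intro conjI)
      apply assumption
     apply (rule assms(2))
    apply (rule exI[of _ vs])
    using vs len by (simp add: EE_def)
  then show ?thesis using sub by blast
qed

theorem proposition2p9:
  fixes F :: "('v, 'c) cgraph" and Cs Bs Ts :: "('v, 'c) cgraph list"
    and P :: "('v, 'c) cgraph" and s t :: 'v
  assumes "frankenstein F Cs Bs Ts"
    and "P \<subseteq> F" and "is_path P s t"
  shows "\<exists>P'\<subseteq>F. is_path P' s t \<and> rainbow P'"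
proof -
  define L where "L = Cs @ Bs @ Ts"
  have fr1: "colored_graph F" using assms(1) unfolding frankenstein_def by simp
  have fr2: "is_partition F L" using assms(1) unfolding frankenstein_def L_def by simp
  have fr3: "\<forall>C\<in>set Cs. long_rainbow_odd_cycle C" using assms(1) unfolding frankenstein_def by simp
  have fr4: "\<forall>B\<in>set Bs. bad_piece B" using assms(1) unfolding frankenstein_def by simp
  have fr5: "\<forall>T\<in>set Ts. is_tree T \<and> rainbow T" using assms(1) unfolding frankenstein_def by simp
  have Fun: "F = \<Union> (set L)" using fr2 unfolding is_partition_def by simp
  have disjc: "colors G \<inter> colors H = {}" if G: "G \<in> set L" and H: "H \<in> set L" and ne: "G \<noteq> H" for G H
  proof -
    obtain i where i: "i < length L" "G = L!i" using G by (auto simp: in_set_conv_nth)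
    obtain j where j: "j < length L" "H = L!j" using H by (auto simp: in_set_conv_nth)
    have "i \<noteq> j" using i j ne by auto
    have "\<forall>i<length L. \<forall>j<length L. i \<noteq> j \<longrightarrow> colors (L ! i) \<inter> colors (L ! j) = {}"
      using fr2 unfolding is_partition_def by blast
    then show ?thesis using i j \<open>i \<noteq> j\<close> by blast
  qed
  have finF: "finite F" using fr1 unfolding colored_graph_def by simp
  have sub: "G \<subseteq> F" if "G \<in> set L" for G using Fun that by blast
  have finL: "finite G" if "G \<in> set L" for G using finite_subset[OF sub[OF that] finF] .
  have "\<forall>B\<in>set Bs. \<exists>x. x \<in> B \<and> (\<exists>y\<in>B. y \<noteq> x \<and> snd y = snd x)"
  proof
    fix B assume B: "B \<in> set Bs"
    have fB: "finite B" using finL[of B] B unfolding L_def by simp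
    have "almost_rainbow B" using fr4 B unfolding bad_piece_def by blast
    then have "card (snd ` B) + 1 = card B" unfolding almost_rainbow_def colors_def .
    then have "\<not> inj_on snd B" using card_image by fastforce
    then show "\<exists>x. x \<in> B \<and> (\<exists>y\<in>B. y \<noteq> x \<and> snd y = snd x)" unfolding inj_on_def by blast
  qed
  then obtain xs where xs: "\<forall>B\<in>set Bs. xs B \<in> B \<and> (\<exists>y\<in>B. y \<noteq> xs B \<and> snd y = snd (xs B))"
    by (rule bchoice[elim_format]) blast
  define R where "R = xs ` set Bs"
  define F' where "F' = F - R"
  have BinL: "B \<in> set L" if "B \<in> set Bs" for B using that unfolding L_def by simp
  have injB: "inj_on snd (B - {xs B})" if GB: "B \<in> set Bs" for B
  proof -
    let ?x = "xs B"
    obtain y where y: "y \<in> B" "y \<noteq> ?x" "snd y = snd ?x" using xs GB by blast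
    have x: "?x \<in> B" using xs GB by blast
    have fB: "finite B" using finL[OF BinL[OF GB]] .
    have "almost_rainbow B" using fr4 GB unfolding bad_piece_def by blast
    then have c: "card (snd ` B) + 1 = card B" unfolding almost_rainbow_def colors_def .
    have im: "snd ` (B - {?x}) = snd ` B"
    proof
      show "snd ` (B - {?x}) \<subseteq> snd ` B" by blast
      show "snd ` B \<subseteq> snd ` (B - {?x})"
      proof
        fix z assume "z \<in> snd ` B"
        then obtain w where w: "w \<in> B" "z = snd w" by blast
        show "z \<in> snd ` (B - {?x})"
        proof (cases "w = ?x")
          case True
          then have "z = snd y" using w y by simp
          then show ?thesis using y by blast
        next
          case False then show ?thesis using w by blast
        qed
      qed
    qed
    have "card (B - {?x}) = card B - 1" using x fB by simp
    then have "card (snd ` (B - {?x})) = card (B - {?x})" using im c by simp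
    then show ?thesis using inj_on_iff_eq_card fB by blast
  qed
  have injF': "inj_on snd F'"
  proof (rule inj_onI)
    fix a b assume a: "a \<in> F'" and b: "b \<in> F'" and ab: "snd a = snd b"
    obtain G where G: "G \<in> set L" "a \<in> G" using a Fun unfolding F'_def by blast
    obtain H where H: "H \<in> set L" "b \<in> H" using b Fun unfolding F'_def by blast
    have GH: "G = H"
    proof (rule ccontr)
      assume "G \<noteq> H"
      then have "colors G \<inter> colors H = {}" using disjc G H by blast
      moreover have "snd a \<in> colors G \<inter> colors H" using imageI[OF G(2), of snd] imageI[OF H(2), of snd] ab unfolding colors_def by simp
      ultimately show False by blast
    qed
    have bG: "b \<in> G" using H GH by simp
    have rb: "inj_on snd G" if "rainbow G"
      using that finL[OF G(1)] inj_on_iff_eq_card unfolding rainbow_def colors_def by blast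
    have "G \<in> set Cs \<or> G \<in> set Bs \<or> G \<in> set Ts" using G unfolding L_def by auto
    then show "a = b"
    proof (elim disjE)
      assume "G \<in> set Cs"
      then have "rainbow G" using fr3 unfolding long_rainbow_odd_cycle_def by blast
      then show ?thesis using rb G(2) bG ab by (metis inj_onD)
    next
      assume "G \<in> set Ts"
      then have "rainbow G" using fr5 by blast
      then show ?thesis using rb G(2) bG ab by (metis inj_onD)
    next
      assume GB: "G \<in> set Bs"
      have "xs G \<in> R" using GB unfolding R_def by blast
      then have "a \<in> G - {xs G}" "b \<in> G - {xs G}" using a b G(2) bG unfolding F'_def by auto
      then show ?thesis using injB[OF GB] ab by (metis inj_onD)
    qed
  qed
  have F'sub: "F' \<subseteq> F" unfolding F'_def by blast
  have cgF': "colored_graph F'"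
  proof -
    have g: "finite F" "\<forall>e\<in>fst ` F. card e = 2" "inj_on fst F"
      using fr1 unfolding colored_graph_def by auto
    have "finite F'" using finite_subset[OF F'sub g(1)] .
    moreover have "\<forall>e\<in>fst ` F'. card e = 2" using g(2) F'sub by blast
    moreover have "inj_on fst F'" using inj_on_subset[OF g(3) F'sub] .
    ultimately show ?thesis unfolding colored_graph_def by blast
  qed
  have BF': "B - {xs B} \<subseteq> F'" if GB: "B \<in> set Bs" for B
  proof
    fix z assume z: "z \<in> B - {xs B}"
    have zF: "z \<in> F" using z sub[OF BinL[OF GB]] by blast
    have "z \<notin> R"
    proof
      assume "z \<in> R"
      then obtain B' where B': "B' \<in> set Bs" "z = xs B'" unfolding R_def by blast
      have "B' \<noteq> B" using B' z by blast
      moreover have "z \<in> B'" using B' xs by blast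
      ultimately have "colors B \<inter> colors B' = {}" using disjc BinL[OF GB] BinL[OF B'(1)] by metis
      moreover have "snd z \<in> colors B \<inter> colors B'" using z \<open>z \<in> B'\<close> unfolding colors_def by blast
      ultimately show False by blast
    qed
    then show "z \<in> F'" using zF unfolding F'_def by blast
  qed
  have step: "Adj F \<subseteq> (Adj F')\<^sup>*"
  proof
    fix p assume "p \<in> Adj F"
    then obtain u v c where p: "p = (u,v)" "({u,v},c) \<in> F" unfolding Adj_def by blast
    show "p \<in> (Adj F')\<^sup>*"
    proof (cases "({u,v},c) \<in> R")
      case False
      then have "({u,v},c) \<in> F'" using p unfolding F'_def by blast
      then have "(u,v) \<in> Adj F'" unfolding Adj_def by blast
      then show ?thesis using p by simp
    next
      case True
      then obtain B where B: "B \<in> set Bs" "({u,v},c) = xs B" unfolding R_def by blast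
      obtain P1 P2 P3 s' t' where th: "theta_paths P1 P2 P3 s' t'" "B = P1 \<union> P2 \<union> P3"
      proof -
        have "bad_piece B" using fr4 B(1) by blast
        then show ?thesis unfolding bad_piece_def by (elim conjE exE) (rule that, assumption+)
      qed
      have p1: "is_path P1 s' t'" and p2: "is_path P2 s' t'" and p3: "is_path P3 s' t'"
        and d12: "fst ` P1 \<inter> fst ` P2 = {}" and d13: "fst ` P1 \<inter> fst ` P3 = {}"
        using th(1) unfolding theta_paths_def by simp_all
      have d21: "fst ` P2 \<inter> fst ` P1 = {}" using d12 by blast
      have d31: "fst ` P3 \<inter> fst ` P1 = {}" using d13 by blast
      have s1: "P1 \<subseteq> B" and s2: "P2 \<subseteq> B" and s3: "P3 \<subseteq> B" using th(2) by auto
      have xB: "xs B \<in> B" using xs B(1) by blast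
      have fx: "fst (xs B) = {u,v}" using B(2) by (metis fst_conv)
      have "(u,v) \<in> (Adj (B - {xs B}))\<^sup>*"
      proof -
        have "xs B \<in> P1 \<or> xs B \<in> P2 \<or> xs B \<in> P3" using xB th(2) by blast
        then show ?thesis
        proof (elim disjE)
          assume "xs B \<in> P1" then show ?thesis using theta_edge_reach[OF p1 p2 d12 s1 s2 _ fx] by blast
        next
          assume "xs B \<in> P2" then show ?thesis using theta_edge_reach[OF p2 p1 d21 s2 s1 _ fx] by blast
        next
          assume "xs B \<in> P3" then show ?thesis using theta_edge_reach[OF p3 p1 d31 s3 s1 _ fx] by blast
        qed
      qed
      then show ?thesis using reach_mono[OF BF'[OF B(1)]] p(1) by metis
    qed
  qed
  then have "(Adj F)\<^sup>* \<subseteq> (Adj F')\<^sup>*" by (rule rtrancl_subset_rtrancl)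
  moreover have "(s,t) \<in> (Adj F)\<^sup>*" using reach_mono[OF assms(2) path_reach[OF assms(3)]] .
  ultimately have st: "(s,t) \<in> (Adj F')\<^sup>*" by blast
  have "s \<noteq> t" using assms(3) unfolding is_path_def by simp
  then obtain P' where P': "P' \<subseteq> F'" "is_path P' s t" using walk_to_path[OF st _ cgF'] by blast
  have "inj_on snd P'" using inj_on_subset[OF injF' P'(1)] .
  then have "rainbow P'" unfolding rainbow_def colors_def by (simp add: card_image)
  then show ?thesis using P' F'sub by blast
qed

end
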